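(* Let $\Pi$ be a random permutation with values in $S_n$. Then $\Pi$ is $L$-decomposable if and only if, for every consecutive partition $\underline{\kappa}=(\underline{\kappa}_1,\ldots,\underline{\kappa}_{j+1})$ of $\{1,\ldots,n\}$, the ordered marginals $\Pi_{\underline{\kappa}_1},\ldots,\Pi_{\underline{\kappa}_{j+1}}$ are conditionally independent given the vector of unordered marginals $\{\Pi_{\underline{\kappa}}\}$; that is, for every $\pi\in S_n$ with $P(\{\Pi_{\underline{\kappa}}\}=\{\pi_{\underline{\kappa}}\})>0$, \[ P(\Pi=\pi \mid \{\Pi_{\underline{\kappa}}\}=\{\pi_{\underline{\kappa}}\})=\prod_{i=1}^{j+1} P(\Pi_{\underline{\kappa}_i}=\pi_{\underline{\kappa}_i}\mid \{\Pi_{\underline{\kappa}}\}=\{\pi_{\underline{\kappa}}\}). \]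
   Context: $S_n$ is the group of permutations of $\{1,\ldots,n\}$; $\Pi$ is a random element of $S_n$ with distribution $p(\pi)=P(\Pi=\pi)$. For a vector $v$ and $i\le j$, write $v\{i:j\}=\{v(i),\ldots,v(j)\}$ (unordered set; empty if $j<i$) and $v(i:j)=(v(i),\ldots,v(j))$ (ordered tuple). $\Pi$ (or $p$) is called $L$-decomposable if for every $2\le k\le n-2$ and every $\pi\in S_n$, $P(\Pi(k+1)=\pi(k+1)\mid \Pi(1:k)=\pi(1:k)) = P(\Pi(k+1)=\pi(k+1)\mid \Pi\{1:k\}=\pi\{1:k\})$ whenever the left-hand side is defined (equivalently, the random sets $\Pi\{1:k\}$, $k=1,\dots,n$, form a Markov chain). A consecutive partition is determined by sections $0=\kappa_0<\kappa_1<\cdots<\kappa_j<\kappa_{j+1}=n$ via $\underline{\kappa}_i=\{\kappa_{i-1}+1,\ldots,\kappa_i\}$. For $\pi\in S_n$, the ordered marginal is $\pi_{\underline{\kappa}_i}=\pi(\kappa_{i-1}+1:\kappa_i)$, the unordered marginal is $\{\pi_{\underline{\kappa}_i}\}=\pi\{\kappa_{i-1}+1:\kappa_i\}$, and $\{\pi_{\underline{\kappa}}\}=(\{\pi_{\underline{\kappa}_1}\},\ldots,\{\pi_{\underline{\kappa}_{j+1}}\})$. *)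

theory Defs
  imports "HOL-Probability.Probability" "HOL-Combinatorics.Permutations"
begin

(* A random permutation of {1..n} is a pmf M on functions nat => nat with
   set_pmf M contained in {pi. pi permutes {1..n}}. *)

definition cond_prob :: "'a pmf \<Rightarrow> 'a set \<Rightarrow> 'a set \<Rightarrow> real" where
  "cond_prob M A B = measure_pmf.prob M (A \<inter> B) / measure_pmf.prob M B"

definition ord_event :: "(nat \<Rightarrow> nat) \<Rightarrow> nat \<Rightarrow> nat \<Rightarrow> (nat \<Rightarrow> nat) set" where
  "ord_event \<pi> a b = {\<sigma>. \<forall>m\<in>{a..b}. \<sigma> m = \<pi> m}"

definition set_event :: "(nat \<Rightarrow> nat) \<Rightarrow> nat \<Rightarrow> nat \<Rightarrow> (nat \<Rightarrow> nat) set" where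
  "set_event \<pi> a b = {\<sigma>. \<sigma> ` {a..b} = \<pi> ` {a..b}}"

definition L_decomposable :: "nat \<Rightarrow> (nat \<Rightarrow> nat) pmf \<Rightarrow> bool" where
  "L_decomposable n M \<longleftrightarrow>
     (\<forall>k \<pi>. 2 \<le> k \<and> k \<le> n - 2 \<and> \<pi> permutes {1..n}
        \<and> measure_pmf.prob M (ord_event \<pi> 1 k) > 0 \<longrightarrow>
        cond_prob M {\<sigma>. \<sigma> (k+1) = \<pi> (k+1)} (ord_event \<pi> 1 k)
        = cond_prob M {\<sigma>. \<sigma> (k+1) = \<pi> (k+1)} (set_event \<pi> 1 k))"

definition consec_sections :: "nat \<Rightarrow> nat \<Rightarrow> (nat \<Rightarrow> nat) \<Rightarrow> bool" where
  "consec_sections n j \<kappa> \<longleftrightarrow>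
     \<kappa> 0 = 0 \<and> \<kappa> (Suc j) = n \<and> (\<forall>i\<le>j. \<kappa> i < \<kappa> (Suc i))"

definition unord_marg_event :: "nat \<Rightarrow> (nat \<Rightarrow> nat) \<Rightarrow> (nat \<Rightarrow> nat) \<Rightarrow> (nat \<Rightarrow> nat) set" where
  "unord_marg_event j \<kappa> \<pi> =
     (\<Inter>i\<in>{1..Suc j}. set_event \<pi> (\<kappa> (i - 1) + 1) (\<kappa> i))"

end

theory Submission
  imports Defs
begin


definition PP :: "nat \<Rightarrow> (nat \<Rightarrow> nat) set" where "PP n = {\<sigma>. \<sigma> permutes {1..n}}"
definition sw :: "nat set \<Rightarrow> (nat \<Rightarrow> nat) \<Rightarrow> (nat \<Rightarrow> nat) \<Rightarrow> nat \<Rightarrow> nat" where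
  "sw B \<sigma> \<tau> = (\<lambda>x. if x \<in> B then \<tau> x else \<sigma> x)"
definition agr :: "nat set \<Rightarrow> (nat \<Rightarrow> nat) \<Rightarrow> (nat \<Rightarrow> nat) \<Rightarrow> bool" where
  "agr I \<sigma> \<tau> = (\<forall>x\<in>I. \<tau> x = \<sigma> x)"

lemma finite_PP[simp]: "finite (PP n)"
  unfolding PP_def by (rule finite_permutations) simp

lemma prob_sum:
  assumes "set_pmf M \<subseteq> PP n"
  shows "measure_pmf.prob M E = (\<Sum>\<sigma>\<in>E \<inter> PP n. pmf M \<sigma>)"
proof -
  have "measure_pmf.prob M E = measure_pmf.prob M (E \<inter> PP n)"
  proof -
    have "E \<inter> PP n \<inter> set_pmf M = E \<inter> set_pmf M" using assms by auto
    then show ?thesis by (metis measure_Int_set_pmf)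
  qed
  also have "\<dots> = (\<Sum>\<sigma>\<in>E \<inter> PP n. pmf M \<sigma>)"
    by (rule measure_measure_pmf_finite) simp
  finally show ?thesis .
qed

lemma sw_PP:
  assumes "\<sigma> \<in> PP n" "\<tau> \<in> PP n" "B \<subseteq> {1..n}" "\<sigma> ` B = \<tau> ` B"
  shows "sw B \<sigma> \<tau> \<in> PP n"
proof -
  have ps: "\<sigma> permutes {1..n}" and pt: "\<tau> permutes {1..n}" using assms unfolding PP_def by auto
  let ?f = "sw B \<sigma> \<tau>"
  have img: "?f ` {1..n} = {1..n}"
  proof -
    have "?f ` {1..n} = \<sigma> ` ({1..n} - B) \<union> \<tau> ` B"
      using assms(3) unfolding sw_def by auto
    also have "\<dots> = \<sigma> ` ({1..n} - B) \<union> \<sigma> ` B" using assms(4) by simp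
    also have "\<dots> = \<sigma> ` {1..n}" using assms(3) by blast
    also have "\<dots> = {1..n}" using permutes_image[OF ps] .
    finally show ?thesis .
  qed
  have "card (?f ` {1..n}) = card {1..n}" by (simp only: img)
  then have "inj_on ?f {1..n}"
    by (intro eq_card_imp_inj_on) auto
  then have "bij_betw ?f {1..n} {1..n}" using img by (simp add: bij_betw_def)
  moreover have "\<And>x. x \<notin> {1..n} \<Longrightarrow> ?f x = x"
    using assms(3) permutes_not_in[OF ps] unfolding sw_def by auto
  ultimately show ?thesis unfolding PP_def by (auto intro: bij_imp_permutes)
qed

lemma sw_sw1: "sw B (sw B \<tau> \<rho>) (sw B \<rho> \<tau>) = \<tau>" by (auto simp: sw_def)

lemma swap_sum:
  fixes p :: "(nat \<Rightarrow> nat) \<Rightarrow> real"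
  assumes fin: "finite R"
    and cl: "\<And>\<sigma> \<tau>. \<sigma> \<in> R \<Longrightarrow> \<tau> \<in> R \<Longrightarrow> sw B \<sigma> \<tau> \<in> R"
    and pw: "\<And>\<sigma> \<tau>. \<sigma> \<in> R \<Longrightarrow> \<tau> \<in> R \<Longrightarrow> p \<sigma> * p \<tau> = p (sw B \<sigma> \<tau>) * p (sw B \<tau> \<sigma>)"
    and dis: "I \<inter> B = {}"
  shows "(\<Sum>\<tau>\<in>{\<tau>\<in>R. agr (I \<union> B) \<sigma> \<tau>}. p \<tau>) * (\<Sum>\<rho>\<in>R. p \<rho>)
       = (\<Sum>\<tau>\<in>{\<tau>\<in>R. agr I \<sigma> \<tau>}. p \<tau>) * (\<Sum>\<rho>\<in>{\<tau>\<in>R. agr B \<sigma> \<tau>}. p \<rho>)"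
proof -
  let ?A1 = "{\<tau>\<in>R. agr (I \<union> B) \<sigma> \<tau>}" and ?A2 = "{\<tau>\<in>R. agr I \<sigma> \<tau>}" and ?A3 = "{\<tau>\<in>R. agr B \<sigma> \<tau>}"
  define f where "f = (\<lambda>(\<tau>, \<rho>). (sw B \<tau> \<rho>, sw B \<rho> \<tau>))"
  have ff: "f (f x) = x" for x unfolding f_def by (cases x) (simp add: sw_sw1)
  have bij: "bij_betw f (?A1 \<times> R) (?A2 \<times> ?A3)"
  proof (rule bij_betw_byWitness[where f'=f])
    show "\<forall>a\<in>?A1 \<times> R. f (f a) = a" "\<forall>a\<in>?A2 \<times> ?A3. f (f a) = a" using ff by auto
    show "f ` (?A1 \<times> R) \<subseteq> ?A2 \<times> ?A3"
      using dis cl unfolding f_def by (auto simp: agr_def sw_def)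
    show "f ` (?A2 \<times> ?A3) \<subseteq> ?A1 \<times> R"
      using dis cl unfolding f_def by (auto simp: agr_def sw_def)
  qed
  have "(\<Sum>\<tau>\<in>?A1. p \<tau>) * (\<Sum>\<rho>\<in>R. p \<rho>) = (\<Sum>x\<in>?A1 \<times> R. p (fst x) * p (snd x))"
    by (simp add: sum_product sum.cartesian_product case_prod_beta)
  also have "\<dots> = (\<Sum>x\<in>?A1 \<times> R. p (fst (f x)) * p (snd (f x)))"
    by (rule sum.cong) (auto simp: f_def pw)
  also have "\<dots> = (\<Sum>x\<in>?A2 \<times> ?A3. p (fst x) * p (snd x))"
    using sum.reindex_bij_betw[OF bij, of "\<lambda>x. p (fst x) * p (snd x)"] by simp
  also have "\<dots> = (\<Sum>\<tau>\<in>?A2. p \<tau>) * (\<Sum>\<rho>\<in>?A3. p \<rho>)"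
    by (simp add: sum_product sum.cartesian_product case_prod_beta)
  finally show ?thesis .
qed

lemma sw_img_disj: "T \<inter> B = {} \<Longrightarrow> sw B \<sigma> \<tau> ` T = \<sigma> ` T"
  by (auto simp: sw_def image_def)
lemma sw_img_sub: "T \<subseteq> B \<Longrightarrow> sw B \<sigma> \<tau> ` T = \<tau> ` T"
  by (auto simp: sw_def image_def)
lemma sw_img_sup: "B \<subseteq> T \<Longrightarrow> \<sigma> ` B = \<tau> ` B \<Longrightarrow> sw B \<sigma> \<tau> ` T = \<sigma> ` T"
proof -
  assume a: "B \<subseteq> T" "\<sigma> ` B = \<tau> ` B"
  have "sw B \<sigma> \<tau> ` T = sw B \<sigma> \<tau> ` (T - B) \<union> sw B \<sigma> \<tau> ` B" using a by blast
  also have "\<dots> = \<sigma> ` (T - B) \<union> \<sigma> ` B" using a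
    using sw_img_disj[of "T - B" B \<sigma> \<tau>] sw_img_sub[of B B \<sigma> \<tau>] by auto
  also have "\<dots> = \<sigma> ` T" using a by blast
  finally show ?thesis .
qed

definition cc :: "(nat \<Rightarrow> nat) pmf \<Rightarrow> nat \<Rightarrow> (nat \<Rightarrow> nat) \<Rightarrow> real" where
  "cc M m \<sigma> = cond_prob M {\<rho>. \<rho> (m+1) = \<sigma> (m+1)} (set_event \<sigma> 1 m)"

lemma cc_local: "\<sigma> ` {1..m} = \<tau> ` {1..m} \<Longrightarrow> \<sigma> (m+1) = \<tau> (m+1) \<Longrightarrow> cc M m \<sigma> = cc M m \<tau>"
  unfolding cc_def set_event_def by simp

lemma last_val:
  assumes "\<rho> \<in> PP n" "\<sigma> \<in> PP n" "n \<ge> 1" "\<rho> ` {1..n-1} = \<sigma> ` {1..n-1}"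
  shows "\<rho> n = \<sigma> n"
proof -
  have pr: "\<rho> permutes {1..n}" and ps: "\<sigma> permutes {1..n}" using assms unfolding PP_def by auto
  have e: "f ` {1..n} - f ` {1..n-1} = {f n}" if "f permutes {1..n}" for f
  proof -
    have "f ` {1..n} - f ` {1..n-1} = f ` ({1..n} - {1..n-1})"
      using permutes_inj[OF that] by (simp add: image_set_diff)
    also have "{1..n} - {1..n-1} = {n}" using assms(3) by auto
    finally show ?thesis by simp
  qed
  have "{\<rho> n} = {\<sigma> n}" using e[OF pr] e[OF ps] assms(4) permutes_image[OF pr] permutes_image[OF ps]
    by simp
  then show ?thesis by simp
qed

lemma ord_full:
  assumes "\<sigma> \<in> PP n"
  shows "ord_event \<sigma> 1 n \<inter> PP n = {\<sigma>}"
proof -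
  have "\<rho> = \<sigma>" if "\<rho> \<in> PP n" "\<forall>m\<in>{1..n}. \<rho> m = \<sigma> m" for \<rho>
  proof
    fix x show "\<rho> x = \<sigma> x"
      using that assms permutes_not_in[of \<rho> "{1..n}" x] permutes_not_in[of \<sigma> "{1..n}" x]
      unfolding PP_def by (cases "x \<in> {1..n}") auto
  qed
  then show ?thesis using assms unfolding ord_event_def by auto
qed


context
  fixes n :: nat and M :: "(nat \<Rightarrow> nat) pmf"
  assumes supp: "set_pmf M \<subseteq> PP n"
begin

lemma chain_step:
  assumes L: "L_decomposable n M" and s: "\<sigma> \<in> PP n" and m: "m < n"
  shows "measure_pmf.prob M (ord_event \<sigma> 1 (Suc m)) = measure_pmf.prob M (ord_event \<sigma> 1 m) * cc M m \<sigma>"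
proof -
  let ?P = "measure_pmf.prob M"
  let ?X = "{\<rho>. \<rho> (m+1) = \<sigma> (m+1)}" and ?O = "ord_event \<sigma> 1 m" and ?S = "set_event \<sigma> 1 m"
  have OS: "ord_event \<sigma> 1 (Suc m) = ?X \<inter> ?O"
    unfolding ord_event_def by (auto simp: le_Suc_eq)
  show ?thesis
  proof (cases "?P ?O = 0")
    case True
    have "?P (?X \<inter> ?O) \<le> ?P ?O" by (rule measure_pmf.finite_measure_mono) auto
    then have "?P (?X \<inter> ?O) = 0" using True measure_nonneg[of "measure_pmf M"] by (simp add: antisym)
    then show ?thesis using True OS by simp
  next
    case False
    then have pos: "?P ?O > 0" using measure_nonneg[of "measure_pmf M" ?O] by linarith
    have key: "cond_prob M ?X ?O = cc M m \<sigma>"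
    proof -
      consider "m = 0" | "m = 1" | "m = n - 1" "m \<ge> 2" | "2 \<le> m" "m \<le> n - 2" using m by linarith
      then show ?thesis
      proof cases
        case 1
        then show ?thesis unfolding cc_def cond_prob_def ord_event_def set_event_def by simp
      next
        case 2
        have "?S = ?O" unfolding 2 ord_event_def set_event_def by auto
        then show ?thesis unfolding cc_def by simp
      next
        case 3
        have OsubS: "?O \<subseteq> ?S" unfolding ord_event_def set_event_def by auto
        have last: "\<rho> (m+1) = \<sigma> (m+1)" if "\<rho> \<in> PP n" "\<rho> ` {1..m} = \<sigma> ` {1..m}" for \<rho>
          using last_val[OF that(1) s, of] that 3 by auto
        have a: "?P (?X \<inter> ?O) = ?P ?O"
          unfolding prob_sum[OF supp] using OsubS last
          by (intro sum.cong) (auto simp: set_event_def)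
        have b: "?P (?X \<inter> ?S) = ?P ?S"
          unfolding prob_sum[OF supp] using last
          by (intro sum.cong) (auto simp: set_event_def)
        have "?P ?S \<ge> ?P ?O" by (rule measure_pmf.finite_measure_mono[OF OsubS]) auto
        then have "?P ?S > 0" using pos by linarith
        then show ?thesis using a b pos unfolding cc_def cond_prob_def by simp
      next
        case 4
        then show ?thesis using L s pos unfolding L_decomposable_def PP_def cc_def by auto
      qed
    qed
    then show ?thesis using OS pos unfolding cond_prob_def by (simp add: field_simps)
  qed
qed

lemma chain_prod:
  assumes L: "L_decomposable n M" and s: "\<sigma> \<in> PP n"
  shows "m \<le> n \<Longrightarrow> measure_pmf.prob M (ord_event \<sigma> 1 m) = (\<Prod>l<m. cc M l \<sigma>)"
proof (induction m)
  case 0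
  have "ord_event \<sigma> 1 0 = UNIV" unfolding ord_event_def by auto
  then show ?case by simp
next
  case (Suc m)
  then show ?case using chain_step[OF L s, of m] by simp
qed

lemma pmf_prod:
  assumes L: "L_decomposable n M" and s: "\<sigma> \<in> PP n"
  shows "pmf M \<sigma> = (\<Prod>l<n. cc M l \<sigma>)"
proof -
  have "measure_pmf.prob M (ord_event \<sigma> 1 n) = pmf M \<sigma>"
    unfolding prob_sum[OF supp] ord_full[OF s] by simp
  then show ?thesis using chain_prod[OF L s, of n] by simp
qed


lemma cc_swap:
  assumes B: "B = {a..b}" and a: "1 \<le> a"
    and e1: "\<sigma> ` {1..a-1} = \<tau> ` {1..a-1}" and e2: "\<sigma> ` B = \<tau> ` B"
  shows "cc M m \<sigma> * cc M m \<tau> = cc M m (sw B \<sigma> \<tau>) * cc M m (sw B \<tau> \<sigma>)"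
proof -
  consider "m + 1 < a" | "a \<le> m + 1" "m + 1 \<le> b" | "b < m + 1" by linarith
  then show ?thesis
  proof cases
    case 1
    then have d: "{1..m} \<inter> B = {}" using B by auto
    have "cc M m (sw B \<sigma> \<tau>) = cc M m \<sigma>" "cc M m (sw B \<tau> \<sigma>) = cc M m \<tau>"
      by (rule cc_local; use d 1 B in \<open>simp add: sw_img_disj sw_def\<close>)+
    then show ?thesis by simp
  next
    case 2
    have split: "{1..m} = {1..a-1} \<union> {a..m}" using 2 a by auto
    have d: "{1..a-1} \<inter> B = {}" "{a..m} \<subseteq> B" using B 2 by auto
    have i1: "sw B \<sigma> \<tau> ` {1..m} = \<tau> ` {1..m}"
      unfolding split image_Un using sw_img_disj[OF d(1)] sw_img_sub[OF d(2)] e1 by simp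
    have i2: "sw B \<tau> \<sigma> ` {1..m} = \<sigma> ` {1..m}"
      unfolding split image_Un using sw_img_disj[OF d(1)] sw_img_sub[OF d(2)] e1 by simp
    have "m + 1 \<in> B" using 2 B by auto
    then have v: "sw B \<sigma> \<tau> (m+1) = \<tau> (m+1)" "sw B \<tau> \<sigma> (m+1) = \<sigma> (m+1)"
      by (simp_all add: sw_def)
    have "cc M m (sw B \<sigma> \<tau>) = cc M m \<tau>" "cc M m (sw B \<tau> \<sigma>) = cc M m \<sigma>"
      using cc_local[OF i1 v(1)] cc_local[OF i2 v(2)] by auto
    then show ?thesis by simp
  next
    case 3
    then have d: "B \<subseteq> {1..m}" "m + 1 \<notin> B" using B a by auto
    have v: "sw B \<sigma> \<tau> (m+1) = \<sigma> (m+1)" "sw B \<tau> \<sigma> (m+1) = \<tau> (m+1)"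
      using d(2) by (simp_all add: sw_def)
    have "cc M m (sw B \<sigma> \<tau>) = cc M m \<sigma>" "cc M m (sw B \<tau> \<sigma>) = cc M m \<tau>"
      using cc_local[OF sw_img_sup[OF d(1) e2] v(1)] cc_local[OF sw_img_sup[OF d(1) e2[symmetric]] v(2)] by auto
    then show ?thesis by simp
  qed
qed

lemma pmf_swap:
  assumes L: "L_decomposable n M" and s: "\<sigma> \<in> PP n" "\<tau> \<in> PP n"
    and B: "B = {a..b}" and a: "1 \<le> a" and bn: "b \<le> n"
    and e1: "\<sigma> ` {1..a-1} = \<tau> ` {1..a-1}" and e2: "\<sigma> ` B = \<tau> ` B"
  shows "pmf M \<sigma> * pmf M \<tau> = pmf M (sw B \<sigma> \<tau>) * pmf M (sw B \<tau> \<sigma>)"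
proof -
  have Bs: "B \<subseteq> {1..n}" using B a bn by auto
  have p1: "sw B \<sigma> \<tau> \<in> PP n" "sw B \<tau> \<sigma> \<in> PP n"
    using sw_PP[OF s Bs e2] sw_PP[OF s(2) s(1) Bs e2[symmetric]] by auto
  have "pmf M \<sigma> * pmf M \<tau> = (\<Prod>l<n. cc M l \<sigma> * cc M l \<tau>)"
    using pmf_prod[OF L s(1)] pmf_prod[OF L s(2)] by (simp add: prod.distrib)
  also have "\<dots> = (\<Prod>l<n. cc M l (sw B \<sigma> \<tau>) * cc M l (sw B \<tau> \<sigma>))"
    using cc_swap[OF B a e1 e2] by simp
  also have "\<dots> = pmf M (sw B \<sigma> \<tau>) * pmf M (sw B \<tau> \<sigma>)"
    using pmf_prod[OF L p1(1)] pmf_prod[OF L p1(2)] by (simp add: prod.distrib)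
  finally show ?thesis .
qed


lemma pmf_swap_sum:
  assumes L: "L_decomposable n M" and R: "R \<subseteq> PP n"
    and cl: "\<And>\<sigma> \<tau>. \<sigma> \<in> R \<Longrightarrow> \<tau> \<in> R \<Longrightarrow> sw B \<sigma> \<tau> \<in> R"
    and B: "B = {a..b}" and a: "1 \<le> a" and bn: "b \<le> n"
    and e: "\<And>\<sigma> \<tau>. \<sigma> \<in> R \<Longrightarrow> \<tau> \<in> R \<Longrightarrow> \<sigma> ` {1..a-1} = \<tau> ` {1..a-1} \<and> \<sigma> ` B = \<tau> ` B"
    and dis: "I \<inter> B = {}"
  shows "(\<Sum>\<tau>\<in>{\<tau>\<in>R. agr (I \<union> B) \<sigma> \<tau>}. pmf M \<tau>) * (\<Sum>\<rho>\<in>R. pmf M \<rho>)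
       = (\<Sum>\<tau>\<in>{\<tau>\<in>R. agr I \<sigma> \<tau>}. pmf M \<tau>) * (\<Sum>\<rho>\<in>{\<tau>\<in>R. agr B \<sigma> \<tau>}. pmf M \<rho>)"
proof (rule swap_sum[OF _ cl _ dis])
  show "finite R" using R finite_PP finite_subset by blast
  fix \<sigma> \<tau> assume st: "\<sigma> \<in> R" "\<tau> \<in> R"
  show "pmf M \<sigma> * pmf M \<tau> = pmf M (sw B \<sigma> \<tau>) * pmf M (sw B \<tau> \<sigma>)"
    apply (rule pmf_swap[OF L _ _ B a bn])
    using e[OF st] st R by auto
qed

end




definition DD :: "(nat \<Rightarrow> nat) \<Rightarrow> nat \<Rightarrow> nat set" where "DD \<kappa> i = {\<kappa> (i - 1) + 1..\<kappa> i}"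

lemma U_char: "\<sigma> \<in> unord_marg_event j \<kappa> \<pi> \<longleftrightarrow> (\<forall>i\<in>{1..Suc j}. \<sigma> ` DD \<kappa> i = \<pi> ` DD \<kappa> i)"
  unfolding unord_marg_event_def set_event_def DD_def by auto

lemma U_eq: "\<sigma> \<in> unord_marg_event j \<kappa> \<pi> \<Longrightarrow> unord_marg_event j \<kappa> \<sigma> = unord_marg_event j \<kappa> \<pi>"
proof -
  assume h: "\<sigma> \<in> unord_marg_event j \<kappa> \<pi>"
  have "\<forall>i\<in>{1..Suc j}. \<sigma> ` DD \<kappa> i = \<pi> ` DD \<kappa> i" using h U_char by blast
  then show ?thesis unfolding set_eq_iff U_char by auto
qed

context
  fixes n j :: nat and \<kappa> :: "nat \<Rightarrow> nat"
  assumes cs: "consec_sections n j \<kappa>"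
begin

lemma k0: "\<kappa> 0 = 0" and kn: "\<kappa> (Suc j) = n" and kstep: "i \<le> j \<Longrightarrow> \<kappa> i < \<kappa> (Suc i)"
  using cs unfolding consec_sections_def by auto

lemma kmono: "l \<le> i \<Longrightarrow> i \<le> Suc j \<Longrightarrow> \<kappa> l \<le> \<kappa> i"
proof (induction i)
  case 0 then show ?case by simp
next
  case (Suc i) then show ?case using kstep[of i] by (cases "l = Suc i") auto
qed

lemma kle: "i \<le> Suc j \<Longrightarrow> \<kappa> i \<le> n" using kmono[of i "Suc j"] kn by simp

lemma D_disj: "i \<in> {1..Suc j} \<Longrightarrow> l \<in> {1..Suc j} \<Longrightarrow> i \<noteq> l \<Longrightarrow> DD \<kappa> i \<inter> DD \<kappa> l = {}"
proof -
  have *: "DD \<kappa> i \<inter> DD \<kappa> l = {}" if "i \<in> {1..Suc j}" "l \<in> {1..Suc j}" "i < l" for i l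
  proof -
    have "\<kappa> i \<le> \<kappa> (l - 1)" using kmono[of i "l - 1"] that by auto
    then show ?thesis unfolding DD_def by auto
  qed
  assume "i \<in> {1..Suc j}" "l \<in> {1..Suc j}" "i \<noteq> l"
  then show ?thesis using *[of i l] *[of l i] by (cases "i < l") auto
qed

lemma prefix_split: "l \<le> j \<Longrightarrow> {1..\<kappa> (Suc l)} = {1..\<kappa> l} \<union> DD \<kappa> (Suc l)"
  using kmono[of l "Suc l"] unfolding DD_def by auto

lemma prefix_disj: "{1..\<kappa> l} \<inter> DD \<kappa> (Suc l) = {}"
  unfolding DD_def by auto

lemma prefix_img: "\<sigma> \<in> unord_marg_event j \<kappa> \<pi> \<Longrightarrow> l \<le> Suc j \<Longrightarrow> \<sigma> ` {1..\<kappa> l} = \<pi> ` {1..\<kappa> l}"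
proof (induction l)
  case 0 then show ?case using k0 by simp
next
  case (Suc l)
  then show ?case using prefix_split[of l] U_char[of \<sigma> j \<kappa> \<pi>] by (simp add: image_Un)
qed

lemma sw_U:
  assumes "\<sigma> \<in> unord_marg_event j \<kappa> \<pi>" "\<tau> \<in> unord_marg_event j \<kappa> \<pi>" "i \<in> {1..Suc j}"
  shows "sw (DD \<kappa> i) \<sigma> \<tau> \<in> unord_marg_event j \<kappa> \<pi>"
  unfolding U_char
proof
  fix l assume l: "l \<in> {1..Suc j}"
  show "sw (DD \<kappa> i) \<sigma> \<tau> ` DD \<kappa> l = \<pi> ` DD \<kappa> l"
  proof (cases "l = i")
    case True then show ?thesis using sw_img_sub[of "DD \<kappa> l" "DD \<kappa> i" \<sigma> \<tau>] assms l U_char by auto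
  next
    case False then show ?thesis using sw_img_disj[OF D_disj[OF l assms(3) False]] assms l U_char by auto
  qed
qed

end


lemma forward:
  assumes supp: "set_pmf M \<subseteq> PP n" and L: "L_decomposable n M" and cs: "consec_sections n j \<kappa>"
    and pi: "\<pi> \<in> PP n" and pos: "measure_pmf.prob M (unord_marg_event j \<kappa> \<pi>) > 0"
  shows "cond_prob M {\<pi>} (unord_marg_event j \<kappa> \<pi>)
       = (\<Prod>i\<in>{1..Suc j}. cond_prob M (ord_event \<pi> (\<kappa> (i - 1) + 1) (\<kappa> i)) (unord_marg_event j \<kappa> \<pi>))"
proof -
  define U where "U = unord_marg_event j \<kappa> \<pi>"
  define R where "R = U \<inter> PP n"
  define Z where "Z = (\<Sum>\<tau>\<in>R. pmf M \<tau>)"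
  define PI where "PI I = (\<Sum>\<tau>\<in>{\<tau>\<in>R. agr I \<pi> \<tau>}. pmf M \<tau>)" for I
  have piU: "\<pi> \<in> U" unfolding U_def U_char by simp
  have RP: "R \<subseteq> PP n" unfolding R_def by auto
  have claim: "N \<le> j \<Longrightarrow> PI {1..\<kappa> (Suc N)} * Z ^ N = (\<Prod>i\<in>{1..Suc N}. PI (DD \<kappa> i))" for N
  proof (induction N)
    case 0
    have "DD \<kappa> 1 = {1..\<kappa> 1}" unfolding DD_def using k0[OF cs] by simp
    then show ?case by simp
  next
    case (Suc N)
    let ?I = "{1..\<kappa> (Suc N)}" and ?B = "DD \<kappa> (Suc (Suc N))"
    have sp: "{1..\<kappa> (Suc (Suc N))} = ?I \<union> ?B" using prefix_split[OF cs, of "Suc N"] Suc.prems by simp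
    have ss: "Suc (Suc N) \<in> {1..Suc j}" using Suc.prems by simp
    have cl: "sw ?B \<sigma> \<tau> \<in> R" if "\<sigma> \<in> R" "\<tau> \<in> R" for \<sigma> \<tau>
    proof -
      have "sw ?B \<sigma> \<tau> \<in> U" using sw_U[OF cs _ _ ss] that unfolding R_def U_def by auto
      moreover have "sw ?B \<sigma> \<tau> \<in> PP n"
      proof (rule sw_PP)
        show "?B \<subseteq> {1..n}" using kle[OF cs, of "Suc (Suc N)"] Suc.prems unfolding DD_def by auto
        have "\<sigma> \<in> U" "\<tau> \<in> U" using that unfolding R_def by auto
        then show "\<sigma> ` ?B = \<tau> ` ?B" using ss U_char[of \<sigma> j \<kappa> \<pi>] U_char[of \<tau> j \<kappa> \<pi>] unfolding U_def by auto
      qed (use that in \<open>auto simp: R_def\<close>)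
      ultimately show ?thesis unfolding R_def by auto
    qed
    have e: "\<sigma> ` {1..(\<kappa> (Suc N) + 1) - 1} = \<tau> ` {1..(\<kappa> (Suc N) + 1) - 1} \<and> \<sigma> ` ?B = \<tau> ` ?B"
      if "\<sigma> \<in> R" "\<tau> \<in> R" for \<sigma> \<tau>
    proof -
      have "\<sigma> \<in> U" "\<tau> \<in> U" using that unfolding R_def by auto
      then show ?thesis
        using prefix_img[OF cs, of \<sigma> \<pi> "Suc N"] prefix_img[OF cs, of \<tau> \<pi> "Suc N"] ss Suc.prems
          U_char[of \<sigma> j \<kappa> \<pi>] U_char[of \<tau> j \<kappa> \<pi>]
        unfolding U_def by auto
    qed
    have sw: "PI (?I \<union> ?B) * Z = PI ?I * PI ?B"
      unfolding PI_def Z_def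
      by (rule pmf_swap_sum[OF supp L RP cl _ _ _ e prefix_disj[OF cs]])
         (use kle[OF cs, of "Suc (Suc N)"] Suc.prems in \<open>auto simp: DD_def\<close>)
    have "PI {1..\<kappa> (Suc (Suc N))} * Z ^ Suc N = (PI (?I \<union> ?B) * Z) * Z ^ N"
      unfolding sp by (simp add: algebra_simps)
    also have "\<dots> = (PI ?I * Z ^ N) * PI ?B" unfolding sw by (simp add: algebra_simps)
    also have "\<dots> = (\<Prod>i\<in>{1..Suc N}. PI (DD \<kappa> i)) * PI ?B" using Suc by simp
    also have "\<dots> = (\<Prod>i\<in>{1..Suc (Suc N)}. PI (DD \<kappa> i))"
    proof -
      have "{1..Suc (Suc N)} = insert (Suc (Suc N)) {1..Suc N}" by auto
      then show ?thesis by (simp add: mult.commute)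
    qed
    finally show ?case .
  qed
  have full: "PI {1..n} = pmf M \<pi>"
  proof -
    have "{\<tau>\<in>R. agr {1..n} \<pi> \<tau>} = {\<pi>}"
      using ord_full[OF pi] piU pi unfolding R_def agr_def ord_event_def by auto
    then show ?thesis unfolding PI_def by simp
  qed
  have main: "pmf M \<pi> * Z ^ j = (\<Prod>i\<in>{1..Suc j}. PI (DD \<kappa> i))"
    using claim[of j] full kn[OF cs] by simp
  have pZ: "measure_pmf.prob M U = Z" unfolding prob_sum[OF supp] Z_def R_def by simp
  have Zpos: "Z > 0" using pos pZ unfolding U_def by simp
  have p1: "measure_pmf.prob M ({\<pi>} \<inter> U) = pmf M \<pi>"
    using piU by (simp add: measure_pmf_single)
  have p2: "measure_pmf.prob M (ord_event \<pi> (\<kappa> (i - 1) + 1) (\<kappa> i) \<inter> U) = PI (DD \<kappa> i)" for i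
  proof -
    have "ord_event \<pi> (\<kappa> (i - 1) + 1) (\<kappa> i) \<inter> U \<inter> PP n = {\<tau>\<in>R. agr (DD \<kappa> i) \<pi> \<tau>}"
      unfolding R_def DD_def ord_event_def agr_def by auto
    then show ?thesis unfolding prob_sum[OF supp] PI_def by simp
  qed
  have "(\<Prod>i\<in>{1..Suc j}. cond_prob M (ord_event \<pi> (\<kappa> (i - 1) + 1) (\<kappa> i)) U)
      = (\<Prod>i\<in>{1..Suc j}. PI (DD \<kappa> i)) / Z ^ Suc j"
    unfolding cond_prob_def p2 pZ by (simp add: prod_dividef)
  also have "\<dots> = pmf M \<pi> / Z" unfolding main[symmetric] using Zpos by (simp add: field_simps)
  also have "\<dots> = cond_prob M {\<pi>} U" unfolding cond_prob_def p1 pZ ..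
  finally show ?thesis unfolding U_def by simp
qed


lemma compl_img:
  assumes "\<tau> \<in> PP n" "\<sigma> \<in> PP n" "\<tau> ` {1..k} = \<sigma> ` {1..k}" "k \<le> n"
  shows "\<tau> ` {k+1..n} = \<sigma> ` {k+1..n}"
proof -
  have e: "f ` {k+1..n} = {1..n} - f ` {1..k}" if "f \<in> PP n" for f
  proof -
    have p: "f permutes {1..n}" using that unfolding PP_def by simp
    have "f ` ({1..n} - {1..k}) = f ` {1..n} - f ` {1..k}"
      using permutes_inj[OF p] by (simp add: image_set_diff)
    moreover have "{1..n} - {1..k} = {k+1..n}" by auto
    ultimately show ?thesis using permutes_image[OF p] by simp
  qed
  show ?thesis using e[OF assms(1)] e[OF assms(2)] assms(3) by simp
qed

lemma backward:
  assumes supp: "set_pmf M \<subseteq> PP n"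
    and H: "\<forall>j \<kappa> \<pi>. consec_sections n j \<kappa> \<and> \<pi> permutes {1..n}
       \<and> measure_pmf.prob M (unord_marg_event j \<kappa> \<pi>) > 0 \<longrightarrow>
       cond_prob M {\<pi>} (unord_marg_event j \<kappa> \<pi>)
       = (\<Prod>i\<in>{1..Suc j}. cond_prob M (ord_event \<pi> (\<kappa> (i - 1) + 1) (\<kappa> i))
                                        (unord_marg_event j \<kappa> \<pi>))"
  shows "L_decomposable n M"
  unfolding L_decomposable_def
proof (intro allI impI, elim conjE)
  fix k \<pi> assume k2: "2 \<le> k" and kn: "k \<le> n - 2" and pp: "\<pi> permutes {1..n}"
    and posO: "measure_pmf.prob M (ord_event \<pi> 1 k) > 0"
  let ?P = "measure_pmf.prob M"
  define \<kappa> :: "nat \<Rightarrow> nat" where "\<kappa> = (\<lambda>i. if i = 0 then 0 else if i = 1 then k else n)"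
  have cs: "consec_sections n 1 \<kappa>" unfolding consec_sections_def \<kappa>_def using k2 kn by auto
  define B1 where "B1 = {1..k}"
  define B2 where "B2 = {k+1..n}"
  have D1: "DD \<kappa> 1 = B1" and D2: "DD \<kappa> 2 = B2" unfolding DD_def \<kappa>_def B1_def B2_def by auto
  have pi: "\<pi> \<in> PP n" using pp unfolding PP_def by simp
  have Uc: "\<tau> \<in> unord_marg_event 1 \<kappa> \<sigma> \<longleftrightarrow> \<tau> ` B1 = \<sigma> ` B1" if "\<tau> \<in> PP n" "\<sigma> \<in> PP n" for \<tau> \<sigma>
  proof -
    have "{1..Suc 1} = {1::nat, 2}" by auto
    then have "\<tau> \<in> unord_marg_event 1 \<kappa> \<sigma> \<longleftrightarrow> \<tau> ` B1 = \<sigma> ` B1 \<and> \<tau> ` B2 = \<sigma> ` B2"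
      unfolding U_char D1[symmetric] D2[symmetric] by simp
    moreover have "\<tau> ` B1 = \<sigma> ` B1 \<Longrightarrow> \<tau> ` B2 = \<sigma> ` B2"
      using compl_img[OF that, of k] kn unfolding B1_def B2_def by auto
    ultimately show ?thesis by blast
  qed
  define U where "U = unord_marg_event 1 \<kappa> \<pi>"
  define R where "R = U \<inter> PP n"
  define Z where "Z = (\<Sum>\<tau>\<in>R. pmf M \<tau>)"
  define b where "b = \<pi> (k+1)"
  define P1 where "P1 \<sigma> = (\<Sum>\<tau>\<in>{\<tau>\<in>R. agr B1 \<sigma> \<tau>}. pmf M \<tau>)" for \<sigma>
  define P2 where "P2 \<sigma> = (\<Sum>\<tau>\<in>{\<tau>\<in>R. agr B2 \<sigma> \<tau>}. pmf M \<tau>)" for \<sigma>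
  have finR: "finite R" unfolding R_def by simp
  have RS: "R = set_event \<pi> 1 k \<inter> PP n"
    using Uc[OF _ pi] unfolding R_def U_def set_event_def B1_def by auto
  have pZ: "?P (set_event \<pi> 1 k) = Z" unfolding prob_sum[OF supp] Z_def RS ..
  have OS: "ord_event \<pi> 1 k \<subseteq> set_event \<pi> 1 k" unfolding ord_event_def set_event_def by auto
  have "?P (set_event \<pi> 1 k) \<ge> ?P (ord_event \<pi> 1 k)" by (rule measure_pmf.finite_measure_mono[OF OS]) auto
  then have Zpos: "Z > 0" using posO pZ by linarith
  have OR: "ord_event \<pi> 1 k \<inter> PP n = {\<tau>\<in>R. agr B1 \<pi> \<tau>}"
    using OS unfolding RS by (auto simp: ord_event_def agr_def B1_def)
  have pO: "?P (ord_event \<pi> 1 k) = P1 \<pi>" unfolding prob_sum[OF supp] OR P1_def ..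
  have fac: "pmf M \<sigma> * Z = P1 \<sigma> * P2 \<sigma>" if sR: "\<sigma> \<in> R" for \<sigma>
  proof -
    have sP: "\<sigma> \<in> PP n" and sU: "\<sigma> \<in> U" using sR unfolding R_def by auto
    have Ueq: "unord_marg_event 1 \<kappa> \<sigma> = U" using U_eq sU unfolding U_def by blast
    have pU: "?P U = Z" unfolding prob_sum[OF supp] Z_def R_def ..
    have "?P (unord_marg_event 1 \<kappa> \<sigma>) > 0" using Ueq pU Zpos by simp
    then have h: "cond_prob M {\<sigma>} U = (\<Prod>i\<in>{1..Suc 1}. cond_prob M (ord_event \<sigma> (\<kappa> (i - 1) + 1) (\<kappa> i)) U)"
      using H cs sP Ueq unfolding PP_def by auto
    have pi_: "?P (ord_event \<sigma> (\<kappa> (i - 1) + 1) (\<kappa> i) \<inter> U) = (\<Sum>\<tau>\<in>{\<tau>\<in>R. agr (DD \<kappa> i) \<sigma> \<tau>}. pmf M \<tau>)" for i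
    proof -
      have "ord_event \<sigma> (\<kappa> (i - 1) + 1) (\<kappa> i) \<inter> U \<inter> PP n = {\<tau>\<in>R. agr (DD \<kappa> i) \<sigma> \<tau>}"
        unfolding R_def DD_def ord_event_def agr_def by auto
      then show ?thesis unfolding prob_sum[OF supp] by simp
    qed
    have "{1..Suc 1} = {1::nat, 2}" by auto
    then have "pmf M \<sigma> / Z = (P1 \<sigma> / Z) * (P2 \<sigma> / Z)"
      using h sU unfolding cond_prob_def pi_ pU P1_def P2_def D1 D2
      by (simp add: measure_pmf_single D1[unfolded One_nat_def] D2)
    then show ?thesis using Zpos by (simp add: field_simps power2_eq_square)
  qed
  define A' where "A' = {\<sigma>\<in>R. agr B1 \<pi> \<sigma> \<and> \<sigma> (k+1) = b}"
  define R' where "R' = {\<tau>\<in>R. \<tau> (k+1) = b}"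
  have finA: "finite A'" and finR': "finite R'" using finR unfolding A'_def R'_def by auto
  have pXO: "?P ({\<sigma>. \<sigma> (k+1) = \<pi> (k+1)} \<inter> ord_event \<pi> 1 k) = (\<Sum>\<sigma>\<in>A'. pmf M \<sigma>)"
  proof -
    have "{\<sigma>. \<sigma> (k+1) = \<pi> (k+1)} \<inter> ord_event \<pi> 1 k \<inter> PP n = A'"
      using OR unfolding A'_def b_def by auto
    then show ?thesis unfolding prob_sum[OF supp] by simp
  qed
  have pXS: "?P ({\<sigma>. \<sigma> (k+1) = \<pi> (k+1)} \<inter> set_event \<pi> 1 k) = (\<Sum>\<tau>\<in>R'. pmf M \<tau>)"
  proof -
    have "{\<sigma>. \<sigma> (k+1) = \<pi> (k+1)} \<inter> set_event \<pi> 1 k \<inter> PP n = R'"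
      unfolding R'_def RS b_def by auto
    then show ?thesis unfolding prob_sum[OF supp] by simp
  qed
  have P1A: "P1 \<sigma> = P1 \<pi>" if "\<sigma> \<in> A'" for \<sigma>
  proof -
    have "agr B1 \<sigma> \<tau> = agr B1 \<pi> \<tau>" for \<tau> using that unfolding A'_def agr_def by auto
    then show ?thesis unfolding P1_def by simp
  qed
  have inner: "(\<Sum>\<sigma>\<in>A'. if agr B2 \<sigma> \<tau> then pmf M \<tau> else 0) = pmf M \<tau>" if tR: "\<tau> \<in> R'" for \<tau>
  proof -
    define g where "g = sw B1 \<tau> \<pi>"
    have tP: "\<tau> \<in> PP n" and tU: "\<tau> ` B1 = \<pi> ` B1" and tb: "\<tau> (k+1) = b"
      using tR Uc[of \<tau> \<pi>] pi unfolding R'_def R_def U_def by auto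
    have B1s: "B1 \<subseteq> {1..n}" unfolding B1_def using kn by auto
    have gP: "g \<in> PP n" unfolding g_def by (rule sw_PP[OF tP pi B1s tU])
    have gimg: "g ` B1 = \<pi> ` B1" unfolding g_def by (rule sw_img_sub) simp
    have gA: "g \<in> A'"
      using gP gimg Uc[OF gP pi] tb unfolding A'_def R_def U_def agr_def g_def sw_def B1_def by auto
    have uniq: "{\<sigma>\<in>A'. agr B2 \<sigma> \<tau>} = {g}"
    proof (intro set_eqI iffI)
      fix \<sigma> assume "\<sigma> \<in> {\<sigma>\<in>A'. agr B2 \<sigma> \<tau>}"
      then have sA: "\<sigma> \<in> A'" and a2: "agr B2 \<sigma> \<tau>" by auto
      have sP: "\<sigma> \<in> PP n" using sA unfolding A'_def R_def by auto
      have "\<sigma> x = g x" for x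
      proof (cases "x \<in> {1..n}")
        case True
        then have "x \<in> B1 \<or> x \<in> B2" unfolding B1_def B2_def by auto
        then show ?thesis using sA a2 unfolding A'_def agr_def g_def sw_def B2_def B1_def by auto
      next
        case False
        then have "\<sigma> x = x" "\<tau> x = x" "x \<notin> B1"
          using sP tP permutes_not_in[of \<sigma> "{1..n}" x] permutes_not_in[of \<tau> "{1..n}" x] B1s
          unfolding PP_def by auto
        then show ?thesis unfolding g_def sw_def by simp
      qed
      then show "\<sigma> \<in> {g}" by auto
    next
      fix \<sigma> assume "\<sigma> \<in> {g}"
      then show "\<sigma> \<in> {\<sigma>\<in>A'. agr B2 \<sigma> \<tau>}"
        using gA unfolding agr_def g_def sw_def B1_def B2_def by auto
    qed
    have "(\<Sum>\<sigma>\<in>A'. if agr B2 \<sigma> \<tau> then pmf M \<tau> else 0) = (\<Sum>\<sigma>\<in>{\<sigma>\<in>A'. agr B2 \<sigma> \<tau>}. pmf M \<tau>)"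
      using sum.inter_filter[OF finA, of "\<lambda>_. pmf M \<tau>" "\<lambda>\<sigma>. agr B2 \<sigma> \<tau>"] by simp
    also have "\<dots> = pmf M \<tau>" unfolding uniq by simp
    finally show ?thesis .
  qed
  have P2A: "P2 \<sigma> = (\<Sum>\<tau>\<in>R'. if agr B2 \<sigma> \<tau> then pmf M \<tau> else 0)" if "\<sigma> \<in> A'" for \<sigma>
  proof -
    have k1: "k + 1 \<in> B2" unfolding B2_def using kn k2 by auto
    have "{\<tau>\<in>R. agr B2 \<sigma> \<tau>} = {\<tau>\<in>R'. agr B2 \<sigma> \<tau>}"
      using that k1 unfolding A'_def R'_def agr_def by auto
    then show ?thesis unfolding P2_def using sum.inter_filter[OF finR'] by simp
  qed
  have "(\<Sum>\<sigma>\<in>A'. P2 \<sigma>) = (\<Sum>\<sigma>\<in>A'. \<Sum>\<tau>\<in>R'. if agr B2 \<sigma> \<tau> then pmf M \<tau> else 0)"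
    using P2A by simp
  also have "\<dots> = (\<Sum>\<tau>\<in>R'. \<Sum>\<sigma>\<in>A'. if agr B2 \<sigma> \<tau> then pmf M \<tau> else 0)" by (rule sum.swap)
  also have "\<dots> = (\<Sum>\<tau>\<in>R'. pmf M \<tau>)" using inner by simp
  finally have sumP2: "(\<Sum>\<sigma>\<in>A'. P2 \<sigma>) = (\<Sum>\<tau>\<in>R'. pmf M \<tau>)" .
  have "(\<Sum>\<sigma>\<in>A'. pmf M \<sigma>) = (\<Sum>\<sigma>\<in>A'. P1 \<pi> * P2 \<sigma> / Z)"
  proof (rule sum.cong)
    fix \<sigma> assume s: "\<sigma> \<in> A'"
    then have "\<sigma> \<in> R" unfolding A'_def by auto
    then show "pmf M \<sigma> = P1 \<pi> * P2 \<sigma> / Z" using fac[of \<sigma>] P1A[OF s] Zpos by (simp add: field_simps)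
  qed simp
  also have "\<dots> = P1 \<pi> / Z * (\<Sum>\<sigma>\<in>A'. P2 \<sigma>)" by (simp add: sum_distrib_left)
  finally have key: "(\<Sum>\<sigma>\<in>A'. pmf M \<sigma>) = P1 \<pi> / Z * (\<Sum>\<tau>\<in>R'. pmf M \<tau>)" using sumP2 by simp
  show "cond_prob M {\<sigma>. \<sigma> (k + 1) = \<pi> (k + 1)} (ord_event \<pi> 1 k) =
        cond_prob M {\<sigma>. \<sigma> (k + 1) = \<pi> (k + 1)} (set_event \<pi> 1 k)"
    unfolding cond_prob_def pXO pXS pZ pO key using posO pO Zpos by (simp add: field_simps)
qed


theorem proposition2:
  fixes n :: nat and M :: "(nat \<Rightarrow> nat) pmf"
  assumes "set_pmf M \<subseteq> {\<pi>. \<pi> permutes {1..n}}"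
  shows "L_decomposable n M \<longleftrightarrow>
    (\<forall>j \<kappa> \<pi>. consec_sections n j \<kappa> \<and> \<pi> permutes {1..n}
       \<and> measure_pmf.prob M (unord_marg_event j \<kappa> \<pi>) > 0 \<longrightarrow>
       cond_prob M {\<pi>} (unord_marg_event j \<kappa> \<pi>)
       = (\<Prod>i\<in>{1..Suc j}. cond_prob M (ord_event \<pi> (\<kappa> (i - 1) + 1) (\<kappa> i))
                                        (unord_marg_event j \<kappa> \<pi>)))"
proof -
  have supp: "set_pmf M \<subseteq> PP n" using assms unfolding PP_def .
  show ?thesis
  proof
    assume L: "L_decomposable n M"
    show "\<forall>j \<kappa> \<pi>. consec_sections n j \<kappa> \<and> \<pi> permutes {1..n}
       \<and> measure_pmf.prob M (unord_marg_event j \<kappa> \<pi>) > 0 \<longrightarrow>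
       cond_prob M {\<pi>} (unord_marg_event j \<kappa> \<pi>)
       = (\<Prod>i\<in>{1..Suc j}. cond_prob M (ord_event \<pi> (\<kappa> (i - 1) + 1) (\<kappa> i))
                                        (unord_marg_event j \<kappa> \<pi>))"
      using forward[OF supp L] unfolding PP_def by blast
  next
    assume H: "\<forall>j \<kappa> \<pi>. consec_sections n j \<kappa> \<and> \<pi> permutes {1..n}
       \<and> measure_pmf.prob M (unord_marg_event j \<kappa> \<pi>) > 0 \<longrightarrow>
       cond_prob M {\<pi>} (unord_marg_event j \<kappa> \<pi>)
       = (\<Prod>i\<in>{1..Suc j}. cond_prob M (ord_event \<pi> (\<kappa> (i - 1) + 1) (\<kappa> i))
                                        (unord_marg_event j \<kappa> \<pi>))"
    show "L_decomposable n M" by (rule backward[OF supp H])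
  qed
qed

end
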